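(* Let $\mathcal G\le\mathcal T$ and $\mathcal I$ be as in the context, with $\mathcal G$ acting on $\mathcal I$ by $(a_{ij})\cdot C_A=C_{(a_{ij})\cdot A}$. Form the semidirect products $U(M(\rho,k))\rtimes\mathcal T$ with multiplication $(A,a)(B,b)=(A\,(a\cdot B),ab)$ and $\mathcal I\rtimes\mathcal G$ with multiplication $(C_A,a)(C_B,b)=(C_AC_{a\cdot B},ab)$, and let $D_0=\{({\rm diag}(d_1,\dots,d_n),(d_i^{-1}d_j)_{i\rho j}) : d_i\in k^*\}$, a normal subgroup of $U(M(\rho,k))\rtimes\mathcal T$. Then the map $\Psi:\mathcal I\rtimes\mathcal G\to (U(M(\rho,k))\rtimes\mathcal T)/D_0$, $\Psi(C_A,(a_{ij}))=\overline{(A,(a_{ij}))}$, is well defined and is a group isomorphism.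
   Context: Let $k$ be a field, $n\ge1$, $\rho$ a preorder on $\{1,\dots,n\}$, $M(\rho,k)$ the subalgebra of $M_n(k)$ of matrices with $(i,j)$-entry $0$ whenever $(i,j)\notin\rho$, $U(M(\rho,k))$ its unit group. $i\sim j$ iff $i\rho j$ and $j\rho i$; $\mathcal C$ is the set of classes, $\hat i$ the class of $i$, ordered by $\hat i\le\hat j$ iff $i\rho j$. $\mathcal T$ is the group (entrywise product) of families $(a_{ij})_{i\rho j}$ in $k^*$ with $a_{ij}a_{jr}=a_{ir}$ whenever $i\rho j$, $j\rho r$; for $(a_{ij})\in\mathcal T$ and $A=(\alpha_{ij})\in M(\rho,k)$, $(a_{ij})\cdot A$ has $(i,j)$-entry $a_{ij}\alpha_{ij}$ if $i\rho j$ and $0$ otherwise. A class $\alpha\in\mathcal C$ is isolated if $\alpha\le\beta$ or $\beta\le\alpha$ implies $\beta=\alpha$. $\Delta$ is the undirected graph whose vertices are the $i\in\{1,\dots,n\}$ with $\hat i$ not isolated, with an edge between $i,j$ iff $\hat i\neq\hat j$ and $\hat i,\hat j$ are comparable. Let $\Delta_1,\dots,\Delta_z$ be its connected components and choose a spanning tree $T_\ell$ of each $\Delta_\ell$. $\mathcal G$ is the subgroup of $\mathcal T$ of those $(a_{ij})_{i\rho j}$ with $a_{ij}=1$ whenever $i\rho j$ and either $i,j$ are joined by an edge of some $T_\ell$, or $i,j$ both lie in the same isolated class. $\mathcal I=\{C_A : A\in U(M(\rho,k))\}$ with $C_A(X)=AXA^{-1}$ is the group of inner automorphisms of $M(\rho,k)$.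 $\overline{y}$ denotes the class modulo $D_0$. *)

theory Defs
  imports "HOL-Algebra.Coset"
begin

type_synonym 'a mat = "nat \<Rightarrow> nat \<Rightarrow> 'a"

text \<open>Matrices are functions nat => nat => 'a, indices 1..n, zero outside.\<close>

definition rho_preorder :: "nat \<Rightarrow> (nat \<times> nat) set \<Rightarrow> bool" where
  "rho_preorder n \<rho> \<longleftrightarrow> \<rho> \<subseteq> {1..n} \<times> {1..n} \<and> refl_on {1..n} \<rho> \<and> trans \<rho>"

definition mmult :: "nat \<Rightarrow> 'a::field mat \<Rightarrow> 'a mat \<Rightarrow> 'a mat" where
  "mmult n A B = (\<lambda>i j. if i \<in> {1..n} \<and> j \<in> {1..n} then (\<Sum>l=1..n. A i l * B l j) else 0)"

definition mone :: "nat \<Rightarrow> 'a::field mat" where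
  "mone n = (\<lambda>i j. if i = j \<and> i \<in> {1..n} then 1 else 0)"

definition diagm :: "nat \<Rightarrow> (nat \<Rightarrow> 'a::field) \<Rightarrow> 'a mat" where
  "diagm n d = (\<lambda>i j. if i = j \<and> i \<in> {1..n} then d i else 0)"

definition Mrho :: "(nat \<times> nat) set \<Rightarrow> 'a::field mat set" where
  "Mrho \<rho> = {A. \<forall>i j. (i, j) \<notin> \<rho> \<longrightarrow> A i j = 0}"

definition RUnits :: "nat \<Rightarrow> (nat \<times> nat) set \<Rightarrow> 'a::field mat set" where
  "RUnits n \<rho> = {A \<in> Mrho \<rho>. \<exists>B \<in> Mrho \<rho>. mmult n A B = mone n \<and> mmult n B A = mone n}"

definition minv :: "nat \<Rightarrow> (nat \<times> nat) set \<Rightarrow> 'a::field mat \<Rightarrow> 'a mat" where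
  "minv n \<rho> A = (SOME B. B \<in> Mrho \<rho> \<and> mmult n A B = mone n \<and> mmult n B A = mone n)"

definition Cinn :: "nat \<Rightarrow> (nat \<times> nat) set \<Rightarrow> 'a::field mat \<Rightarrow> ('a mat \<Rightarrow> 'a mat)" where
  "Cinn n \<rho> A = restrict (\<lambda>X. mmult n (mmult n A X) (minv n \<rho> A)) (Mrho \<rho>)"

definition Inn :: "nat \<Rightarrow> (nat \<times> nat) set \<Rightarrow> ('a::field mat \<Rightarrow> 'a mat) set" where
  "Inn n \<rho> = Cinn n \<rho> ` RUnits n \<rho>"

text \<open>The group T: families (a_ij) indexed by rho in k^*, multiplicative;
  represented as functions with value 1 outside rho.\<close>
definition Tgrp :: "(nat \<times> nat) set \<Rightarrow> 'a::field mat set" where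
  "Tgrp \<rho> = {a. (\<forall>i j. (i, j) \<in> \<rho> \<longrightarrow> a i j \<noteq> 0) \<and> (\<forall>i j. (i, j) \<notin> \<rho> \<longrightarrow> a i j = 1)
      \<and> (\<forall>i j r. (i, j) \<in> \<rho> \<longrightarrow> (j, r) \<in> \<rho> \<longrightarrow> a i j * a j r = a i r)}"

definition fmul :: "'a::field mat \<Rightarrow> 'a mat \<Rightarrow> 'a mat" where
  "fmul a b = (\<lambda>i j. a i j * b i j)"

definition act :: "(nat \<times> nat) set \<Rightarrow> 'a::field mat \<Rightarrow> 'a mat \<Rightarrow> 'a mat" where
  "act \<rho> a A = (\<lambda>i j. if (i, j) \<in> \<rho> then a i j * A i j else 0)"

definition equivr :: "(nat \<times> nat) set \<Rightarrow> nat \<Rightarrow> nat \<Rightarrow> bool" where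
  "equivr \<rho> i j \<longleftrightarrow> (i, j) \<in> \<rho> \<and> (j, i) \<in> \<rho>"

definition isolated :: "nat \<Rightarrow> (nat \<times> nat) set \<Rightarrow> nat \<Rightarrow> bool" where
  "isolated n \<rho> i \<longleftrightarrow> (\<forall>j \<in> {1..n}. ((i, j) \<in> \<rho> \<or> (j, i) \<in> \<rho>) \<longrightarrow> equivr \<rho> i j)"

definition DeltaV :: "nat \<Rightarrow> (nat \<times> nat) set \<Rightarrow> nat set" where
  "DeltaV n \<rho> = {i \<in> {1..n}. \<not> isolated n \<rho> i}"

definition DeltaE :: "nat \<Rightarrow> (nat \<times> nat) set \<Rightarrow> (nat \<times> nat) set" where
  "DeltaE n \<rho> = {(i, j). i \<in> DeltaV n \<rho> \<and> j \<in> DeltaV n \<rho> \<and> \<not> equivr \<rho> i j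
      \<and> ((i, j) \<in> \<rho> \<or> (j, i) \<in> \<rho>)}"

text \<open>F is the union of spanning trees of the connected components of Delta, i.e. a
  spanning forest: a symmetric subset of the edges with the same connectivity as Delta
  in which every edge is a bridge (so F has no cycles).\<close>
definition spanning_forest :: "nat \<Rightarrow> (nat \<times> nat) set \<Rightarrow> (nat \<times> nat) set \<Rightarrow> bool" where
  "spanning_forest n \<rho> F \<longleftrightarrow> F \<subseteq> DeltaE n \<rho> \<and> sym F
     \<and> (\<forall>i \<in> DeltaV n \<rho>. \<forall>j \<in> DeltaV n \<rho>. (i, j) \<in> F\<^sup>* \<longleftrightarrow> (i, j) \<in> (DeltaE n \<rho>)\<^sup>*)
     \<and> (\<forall>(i, j) \<in> F. (i, j) \<notin> (F - {(i, j), (j, i)})\<^sup>*)"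

definition Ggrp :: "nat \<Rightarrow> (nat \<times> nat) set \<Rightarrow> (nat \<times> nat) set \<Rightarrow> 'a::field mat set" where
  "Ggrp n \<rho> F = {a \<in> Tgrp \<rho>. \<forall>i j. (i, j) \<in> \<rho> \<longrightarrow>
      ((i, j) \<in> F \<or> (isolated n \<rho> i \<and> equivr \<rho> i j)) \<longrightarrow> a i j = 1}"

definition actI :: "nat \<Rightarrow> (nat \<times> nat) set \<Rightarrow> 'a::field mat \<Rightarrow> ('a mat \<Rightarrow> 'a mat) \<Rightarrow> ('a mat \<Rightarrow> 'a mat)" where
  "actI n \<rho> a f = Cinn n \<rho> (act \<rho> a (SOME A. A \<in> RUnits n \<rho> \<and> f = Cinn n \<rho> A))"

definition UT :: "nat \<Rightarrow> (nat \<times> nat) set \<Rightarrow> ('a::field mat \<times> 'a mat) monoid" where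
  "UT n \<rho> = \<lparr>carrier = RUnits n \<rho> \<times> Tgrp \<rho>,
     mult = (\<lambda>(A, a) (B, b). (mmult n A (act \<rho> a B), fmul a b)),
     one = (mone n, \<lambda>i j. 1)\<rparr>"

definition IG :: "nat \<Rightarrow> (nat \<times> nat) set \<Rightarrow> (nat \<times> nat) set \<Rightarrow> (('a::field mat \<Rightarrow> 'a mat) \<times> 'a mat) monoid" where
  "IG n \<rho> F = \<lparr>carrier = Inn n \<rho> \<times> Ggrp n \<rho> F,
     mult = (\<lambda>(f, a) (g, b). (compose (Mrho \<rho>) f (actI n \<rho> a g), fmul a b)),
     one = (Cinn n \<rho> (mone n), \<lambda>i j. 1)\<rparr>"

definition D0 :: "nat \<Rightarrow> (nat \<times> nat) set \<Rightarrow> ('a::field mat \<times> 'a mat) set" where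
  "D0 n \<rho> = {(diagm n d, \<lambda>i j. if (i, j) \<in> \<rho> then inverse (d i) * d j else 1) | d.
      \<forall>i \<in> {1..n}. d i \<noteq> 0}"

definition Psi :: "nat \<Rightarrow> (nat \<times> nat) set \<Rightarrow> ('a::field mat \<Rightarrow> 'a mat) \<times> 'a mat \<Rightarrow> ('a mat \<times> 'a mat) set" where
  "Psi n \<rho> = (\<lambda>(f, a). D0 n \<rho> #>\<^bsub>UT n \<rho>\<^esub> ((SOME A. A \<in> RUnits n \<rho> \<and> f = Cinn n \<rho> A), a))"

end

theory Submission
  imports Defs
begin


locale rs =
  fixes n :: nat and \<rho> :: "(nat \<times> nat) set"
  assumes rp: "rho_preorder n \<rho>"
begin

lemma rho_sub: "(i,j) \<in> \<rho> \<Longrightarrow> i \<in> {1..n} \<and> j \<in> {1..n}"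
  using rp unfolding rho_preorder_def by auto

lemma rho_refl: "i \<in> {1..n} \<Longrightarrow> (i,i) \<in> \<rho>"
  using rp unfolding rho_preorder_def refl_on_def by auto

lemma rho_trans: "(i,j) \<in> \<rho> \<Longrightarrow> (j,r) \<in> \<rho> \<Longrightarrow> (i,r) \<in> \<rho>"
  using rp unfolding rho_preorder_def trans_def by blast

lemma M_out: "A \<in> Mrho \<rho> \<Longrightarrow> (i,j) \<notin> \<rho> \<Longrightarrow> A i j = 0"
  unfolding Mrho_def by auto

lemma M_range: "A \<in> Mrho \<rho> \<Longrightarrow> \<not> (i \<in> {1..n} \<and> j \<in> {1..n}) \<Longrightarrow> A i j = 0"
  using M_out rho_sub by blast

end

lemma mmult_assoc: "mmult n (mmult n A B) C = mmult n A (mmult n B C)"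
proof -
  have "\<And>i j. (\<Sum>l=1..n. (\<Sum>m=1..n. A i m * B m l) * C l j) = (\<Sum>m=1..n. A i m * (\<Sum>l=1..n. B m l * C l j))"
    unfolding sum_distrib_left sum_distrib_right by (subst sum.swap) (simp add: mult.assoc)
  then show ?thesis unfolding mmult_def by (auto intro!: ext sum.cong)
qed

lemma mmult_diag_left: "mmult n (diagm n d) B = (\<lambda>i j. if i \<in> {1..n} \<and> j \<in> {1..n} then d i * B i j else 0)"
  unfolding mmult_def diagm_def by (auto intro!: ext simp: if_distrib[of "\<lambda>x. x * _"] cong: if_cong)

lemma mmult_diag_right: "mmult n B (diagm n d) = (\<lambda>i j. if i \<in> {1..n} \<and> j \<in> {1..n} then B i j * d j else 0)"
  unfolding mmult_def diagm_def by (auto intro!: ext simp: if_distrib[of "\<lambda>x. _ * x"] cong: if_cong)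

lemma mone_diag: "mone n = diagm n (\<lambda>_. 1)"
  unfolding mone_def diagm_def by simp


context rs begin

lemma mone_left: "A \<in> Mrho \<rho> \<Longrightarrow> mmult n (mone n) A = A"
  unfolding mone_diag mmult_diag_left by (rule ext, rule ext) (auto dest: M_range[of A])

lemma mone_right: "A \<in> Mrho \<rho> \<Longrightarrow> mmult n A (mone n) = A"
  unfolding mone_diag mmult_diag_right by (rule ext, rule ext) (auto dest: M_range[of A])

lemma mmult_M: assumes "A \<in> Mrho \<rho>" "B \<in> Mrho \<rho>" shows "mmult n A B \<in> Mrho \<rho>"
proof -
  have "\<And>i j l. (i,j) \<notin> \<rho> \<Longrightarrow> A i l * B l j = 0"
    using assms M_out rho_trans by (metis mult_zero_left mult_zero_right)
  then show ?thesis unfolding Mrho_def mmult_def by (auto intro!: sum.neutral)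
qed

lemma diagm_M: "diagm n d \<in> Mrho \<rho>"
  unfolding Mrho_def diagm_def using rho_refl by auto

lemma mone_M: "mone n \<in> Mrho \<rho>"
  unfolding mone_diag by (rule diagm_M)

lemma T_diag: "a \<in> Tgrp \<rho> \<Longrightarrow> i \<in> {1..n} \<Longrightarrow> a i i = 1"
proof -
  assume a: "a \<in> Tgrp \<rho>" and i: "i \<in> {1..n}"
  then have "a i i * a i i = a i i" "a i i \<noteq> 0" using rho_refl unfolding Tgrp_def by auto
  then show ?thesis by (metis mult_cancel_right2)
qed

lemma T_nz: "a \<in> Tgrp \<rho> \<Longrightarrow> (i,j) \<in> \<rho> \<Longrightarrow> a i j \<noteq> 0"
  unfolding Tgrp_def by auto

lemma T_out: "a \<in> Tgrp \<rho> \<Longrightarrow> (i,j) \<notin> \<rho> \<Longrightarrow> a i j = 1"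
  unfolding Tgrp_def by auto

lemma T_mult: "a \<in> Tgrp \<rho> \<Longrightarrow> (i,j) \<in> \<rho> \<Longrightarrow> (j,r) \<in> \<rho> \<Longrightarrow> a i j * a j r = a i r"
  unfolding Tgrp_def by auto

lemma T_one: "(\<lambda>i j. 1) \<in> Tgrp \<rho>"
  unfolding Tgrp_def by auto

lemma T_fmul: "a \<in> Tgrp \<rho> \<Longrightarrow> b \<in> Tgrp \<rho> \<Longrightarrow> fmul a b \<in> Tgrp \<rho>"
  unfolding Tgrp_def fmul_def by (auto simp: algebra_simps)

lemma T_inv: "a \<in> Tgrp \<rho> \<Longrightarrow> (\<lambda>i j. inverse (a i j)) \<in> Tgrp \<rho>"
  unfolding Tgrp_def by (auto simp flip: inverse_mult_distrib)

lemma act_M: "act \<rho> a A \<in> Mrho \<rho>"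
  unfolding act_def Mrho_def by auto

lemma act_one: "A \<in> Mrho \<rho> \<Longrightarrow> act \<rho> (\<lambda>i j. 1) A = A"
  unfolding act_def using M_out by (auto intro!: ext)

lemma act_fmul: "act \<rho> (fmul a b) A = act \<rho> a (act \<rho> b A)"
  unfolding act_def fmul_def by (auto intro!: ext)

lemma act_diag: "a \<in> Tgrp \<rho> \<Longrightarrow> act \<rho> a (diagm n d) = diagm n d"
  unfolding act_def diagm_def by (rule ext, rule ext) (auto simp: T_diag rho_refl)

lemma act_mone: "a \<in> Tgrp \<rho> \<Longrightarrow> act \<rho> a (mone n) = mone n"
  unfolding mone_diag by (rule act_diag)

lemma act_mmult: assumes a: "a \<in> Tgrp \<rho>" and AB: "A \<in> Mrho \<rho>" "B \<in> Mrho \<rho>"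
  shows "act \<rho> a (mmult n A B) = mmult n (act \<rho> a A) (act \<rho> a B)"
proof (rule ext, rule ext)
  fix i j
  show "act \<rho> a (mmult n A B) i j = mmult n (act \<rho> a A) (act \<rho> a B) i j"
  proof (cases "(i,j) \<in> \<rho>")
    case True
    have "\<And>l. a i j * (A i l * B l j) = act \<rho> a A i l * act \<rho> a B l j"
    proof -
      fix l
      show "a i j * (A i l * B l j) = act \<rho> a A i l * act \<rho> a B l j"
      proof (cases "(i,l) \<in> \<rho> \<and> (l,j) \<in> \<rho>")
        case True
        then show ?thesis using T_mult[OF a, of i l j] unfolding act_def by (simp add: algebra_simps)
      next
        case False
        then show ?thesis using M_out[OF AB(1)] M_out[OF AB(2)] unfolding act_def by auto
      qed
    qed
    then show ?thesis using True rho_sub[OF True] unfolding act_def mmult_def by (simp add: sum_distrib_left)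
  next
    case False
    then show ?thesis using M_out[OF mmult_M[OF act_M act_M], of i j a A a B] unfolding act_def by simp
  qed
qed

end

context rs begin

lemma units_I: assumes "A \<in> Mrho \<rho>" "B \<in> Mrho \<rho>" "mmult n A B = mone n" "mmult n B A = mone n"
  shows "A \<in> RUnits n \<rho>" "minv n \<rho> A = B"
proof -
  show U: "A \<in> RUnits n \<rho>" using assms unfolding RUnits_def by auto
  let ?C = "minv n \<rho> A"
  have C: "?C \<in> Mrho \<rho> \<and> mmult n A ?C = mone n \<and> mmult n ?C A = mone n"
    unfolding minv_def by (rule someI[of _ B]) (use assms in auto)
  have "?C = mmult n ?C (mmult n A B)" using assms C mone_right by metis
  also have "\<dots> = mmult n (mmult n ?C A) B" by (simp add: mmult_assoc)
  also have "\<dots> = B" using C assms mone_left by simp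
  finally show "?C = B" .
qed

lemma units_D: assumes "A \<in> RUnits n \<rho>"
  shows "A \<in> Mrho \<rho>" "minv n \<rho> A \<in> Mrho \<rho>" "mmult n A (minv n \<rho> A) = mone n"
    "mmult n (minv n \<rho> A) A = mone n"
proof -
  obtain B where B: "B \<in> Mrho \<rho>" "mmult n A B = mone n" "mmult n B A = mone n"
    "A \<in> Mrho \<rho>" using assms unfolding RUnits_def by auto
  then have "minv n \<rho> A = B" using units_I by blast
  then show "A \<in> Mrho \<rho>" "minv n \<rho> A \<in> Mrho \<rho>" "mmult n A (minv n \<rho> A) = mone n"
    "mmult n (minv n \<rho> A) A = mone n" using B by auto
qed

lemma minv_units: "A \<in> RUnits n \<rho> \<Longrightarrow> minv n \<rho> A \<in> RUnits n \<rho>"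
  using units_D units_I by metis

lemma mone_units: "mone n \<in> RUnits n \<rho>" "minv n \<rho> (mone n) = mone n"
  using units_I[OF mone_M mone_M] mone_left[OF mone_M] by auto

lemma mult_units: assumes "A \<in> RUnits n \<rho>" "B \<in> RUnits n \<rho>"
  shows "mmult n A B \<in> RUnits n \<rho>" "minv n \<rho> (mmult n A B) = mmult n (minv n \<rho> B) (minv n \<rho> A)"
proof -
  note a = units_D[OF assms(1)] and b = units_D[OF assms(2)]
  have 1: "mmult n (mmult n A B) (mmult n (minv n \<rho> B) (minv n \<rho> A)) = mone n"
    by (simp add: mmult_assoc flip: mmult_assoc[of n B] add: b a mone_left)
  have 2: "mmult n (mmult n (minv n \<rho> B) (minv n \<rho> A)) (mmult n A B) = mone n"
    by (simp add: mmult_assoc flip: mmult_assoc[of n "minv n \<rho> A"] add: b a mone_left)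
  show "mmult n A B \<in> RUnits n \<rho>" "minv n \<rho> (mmult n A B) = mmult n (minv n \<rho> B) (minv n \<rho> A)"
    using units_I[OF mmult_M mmult_M 1 2] a b by auto
qed

lemma act_units: assumes "a \<in> Tgrp \<rho>" "A \<in> RUnits n \<rho>"
  shows "act \<rho> a A \<in> RUnits n \<rho>" "minv n \<rho> (act \<rho> a A) = act \<rho> a (minv n \<rho> A)"
proof -
  note u = units_D[OF assms(2)]
  have "mmult n (act \<rho> a A) (act \<rho> a (minv n \<rho> A)) = mone n"
    "mmult n (act \<rho> a (minv n \<rho> A)) (act \<rho> a A) = mone n"
    using act_mmult[OF assms(1)] u act_mone[OF assms(1)] by metis+
  then show "act \<rho> a A \<in> RUnits n \<rho>" "minv n \<rho> (act \<rho> a A) = act \<rho> a (minv n \<rho> A)"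
    using units_I[OF act_M act_M] by auto
qed

lemma diag_mult: "mmult n (diagm n d) (diagm n e) = diagm n (\<lambda>i. d i * e i)"
  unfolding mmult_diag_left by (auto simp: diagm_def intro!: ext)

lemma diag_units: assumes "\<forall>i\<in>{1..n}. d i \<noteq> 0"
  shows "diagm n d \<in> RUnits n \<rho>" "minv n \<rho> (diagm n d) = diagm n (\<lambda>i. inverse (d i))"
proof -
  have "diagm n (\<lambda>i. d i * inverse (d i)) = mone n" "diagm n (\<lambda>i. inverse (d i) * d i) = mone n"
    unfolding mone_def diagm_def using assms by (auto intro!: ext)
  then show "diagm n d \<in> RUnits n \<rho>" "minv n \<rho> (diagm n d) = diagm n (\<lambda>i. inverse (d i))"
    using units_I[OF diagm_M diagm_M] diag_mult by metis+
qed

lemma Cinn_M: "A \<in> RUnits n \<rho> \<Longrightarrow> X \<in> Mrho \<rho> \<Longrightarrow> Cinn n \<rho> A X \<in> Mrho \<rho>"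
  unfolding Cinn_def using units_D mmult_M by (simp add: units_D mmult_M)

lemma Cinn_mult: assumes "A \<in> RUnits n \<rho>" "B \<in> RUnits n \<rho>"
  shows "compose (Mrho \<rho>) (Cinn n \<rho> A) (Cinn n \<rho> B) = Cinn n \<rho> (mmult n A B)"
proof (rule ext)
  fix X
  show "compose (Mrho \<rho>) (Cinn n \<rho> A) (Cinn n \<rho> B) X = Cinn n \<rho> (mmult n A B) X"
    using Cinn_M[OF assms(2)] mult_units[OF assms] unfolding compose_def
    by (auto simp: mmult_assoc Cinn_def)
qed

end

lemma UT_simps [simp]: "carrier (UT n \<rho>) = RUnits n \<rho> \<times> Tgrp \<rho>"
  "(A, a) \<otimes>\<^bsub>UT n \<rho>\<^esub> (B, b) = (mmult n A (act \<rho> a B), fmul a b)"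
  "\<one>\<^bsub>UT n \<rho>\<^esub> = (mone n, \<lambda>i j. 1)"
  unfolding UT_def by auto

definition dd :: "nat \<Rightarrow> (nat \<times> nat) set \<Rightarrow> (nat \<Rightarrow> 'a::field) \<Rightarrow> 'a mat \<times> 'a mat" where
  "dd n \<rho> d = (diagm n d, \<lambda>i j. if (i, j) \<in> \<rho> then inverse (d i) * d j else 1)"

lemma D0_dd: "D0 n \<rho> = {dd n \<rho> d | d. \<forall>i \<in> {1..n}. d i \<noteq> 0}"
  unfolding D0_def dd_def by simp

context rs begin

lemma fmul_one: "fmul (\<lambda>i j. 1) a = a" "fmul a (\<lambda>i j. 1) = a"
  unfolding fmul_def by auto

lemma fmul_assoc: "fmul (fmul a b) c = fmul a (fmul b c)"
  unfolding fmul_def by (simp add: mult.assoc)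

lemma group_UT: "group (UT n \<rho> :: ('a::field mat \<times> 'a mat) monoid)"
proof (rule groupI)
  fix x y :: "'a mat \<times> 'a mat" assume "x \<in> carrier (UT n \<rho>)" "y \<in> carrier (UT n \<rho>)"
  then show "x \<otimes>\<^bsub>UT n \<rho>\<^esub> y \<in> carrier (UT n \<rho>)"
    by (auto simp: mult_units act_units T_fmul)
next
  show "\<one>\<^bsub>UT n \<rho>\<^esub> \<in> carrier (UT n \<rho>)" using mone_units T_one by simp
next
  fix x y z :: "'a mat \<times> 'a mat" assume "x \<in> carrier (UT n \<rho>)" "y \<in> carrier (UT n \<rho>)" "z \<in> carrier (UT n \<rho>)"
  then show "x \<otimes>\<^bsub>UT n \<rho>\<^esub> y \<otimes>\<^bsub>UT n \<rho>\<^esub> z = x \<otimes>\<^bsub>UT n \<rho>\<^esub> (y \<otimes>\<^bsub>UT n \<rho>\<^esub> z)"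
    by (auto simp: mmult_assoc act_mmult units_D act_M act_fmul fmul_assoc)
next
  fix x :: "'a mat \<times> 'a mat" assume "x \<in> carrier (UT n \<rho>)"
  then show "\<one>\<^bsub>UT n \<rho>\<^esub> \<otimes>\<^bsub>UT n \<rho>\<^esub> x = x"
    by (auto simp: act_one units_D mone_left fmul_one)
next
  fix x :: "'a mat \<times> 'a mat" assume x: "x \<in> carrier (UT n \<rho>)"
  then obtain A a where A: "x = (A, a)" "A \<in> RUnits n \<rho>" "a \<in> Tgrp \<rho>" by auto
  let ?b = "\<lambda>i j. inverse (a i j)"
  have b: "?b \<in> Tgrp \<rho>" using T_inv[OF A(3)] .
  have "fmul ?b a = (\<lambda>i j. 1)" unfolding fmul_def
    by (auto intro!: ext) (metis A(3) T_nz T_out left_inverse inverse_1 mult_1)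
  moreover have "mmult n (act \<rho> ?b (minv n \<rho> A)) (act \<rho> ?b A) = mone n"
    using act_mmult[OF b] units_D[OF A(2)] act_mone[OF b] by metis
  ultimately have "(act \<rho> ?b (minv n \<rho> A), ?b) \<otimes>\<^bsub>UT n \<rho>\<^esub> x = \<one>\<^bsub>UT n \<rho>\<^esub>"
    using A by simp
  moreover have "(act \<rho> ?b (minv n \<rho> A), ?b) \<in> carrier (UT n \<rho>)"
    using act_units(1)[OF b minv_units[OF A(2)]] b A by auto
  ultimately show "\<exists>y\<in>carrier (UT n \<rho>). y \<otimes>\<^bsub>UT n \<rho>\<^esub> x = \<one>\<^bsub>UT n \<rho>\<^esub>" by blast
qed

lemma dd_T: assumes "\<forall>i \<in> {1..n}. d i \<noteq> 0"
  shows "(\<lambda>i j. if (i, j) \<in> \<rho> then inverse (d i) * d j else 1) \<in> Tgrp \<rho>"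
  unfolding Tgrp_def using assms rho_sub rho_trans by auto

lemma dd_carrier: "\<forall>i \<in> {1..n}. d i \<noteq> 0 \<Longrightarrow> dd n \<rho> d \<in> carrier (UT n \<rho>)"
  unfolding dd_def using dd_T diag_units by auto

lemma act_dd: assumes "\<forall>i \<in> {1..n}. d i \<noteq> 0" "A \<in> Mrho \<rho>"
  shows "mmult n (diagm n d) (act \<rho> (\<lambda>i j. if (i, j) \<in> \<rho> then inverse (d i) * d j else 1) A)
     = mmult n A (diagm n d)"
  unfolding mmult_diag_left mmult_diag_right act_def
  by (rule ext, rule ext) (use assms M_out[OF assms(2)] in auto)

lemma dd_central: assumes "\<forall>i \<in> {1..n}. d i \<noteq> 0" "x \<in> carrier (UT n \<rho>)"
  shows "dd n \<rho> d \<otimes>\<^bsub>UT n \<rho>\<^esub> x = x \<otimes>\<^bsub>UT n \<rho>\<^esub> dd n \<rho> d"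
proof -
  obtain A a where A: "x = (A, a)" "A \<in> RUnits n \<rho>" "a \<in> Tgrp \<rho>" using assms(2) by auto
  show ?thesis using A act_dd[OF assms(1) units_D(1)[OF A(2)]]
    by (auto simp: dd_def fmul_def mult.commute act_diag)
qed

lemma dd_mult: assumes "\<forall>i \<in> {1..n}. d i \<noteq> 0" "\<forall>i \<in> {1..n}. e i \<noteq> 0"
  shows "dd n \<rho> e \<otimes>\<^bsub>UT n \<rho>\<^esub> dd n \<rho> d = dd n \<rho> (\<lambda>i. e i * d i)"
  using assms act_diag[OF dd_T[OF assms(2)]] rho_sub
  by (auto simp: dd_def fmul_def diag_mult intro!: ext)

end

context rs begin

lemma dd_cong: "\<forall>i \<in> {1..n}. d i = e i \<Longrightarrow> dd n \<rho> d = dd n \<rho> e"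
  unfolding dd_def diagm_def using rho_sub by (auto intro!: ext)

lemma dd_one: "dd n \<rho> (\<lambda>i. 1) = \<one>\<^bsub>UT n \<rho>\<^esub>"
  unfolding dd_def by (simp add: UT_def mone_diag if_distrib cong: if_cong)

lemma dd_inv: assumes "\<forall>i \<in> {1..n}. d i \<noteq> 0"
  shows "inv\<^bsub>UT n \<rho>\<^esub> (dd n \<rho> d) = dd n \<rho> (\<lambda>i. inverse (d i))"
proof -
  have nz: "\<forall>i \<in> {1..n}. inverse (d i) \<noteq> 0" using assms by auto
  have "dd n \<rho> (\<lambda>i. inverse (d i)) \<otimes>\<^bsub>UT n \<rho>\<^esub> dd n \<rho> d = dd n \<rho> (\<lambda>i. inverse (d i) * d i)"
    by (rule dd_mult[OF assms nz])
  also have "\<dots> = dd n \<rho> (\<lambda>i. 1)" by (rule dd_cong) (use assms in auto)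
  finally show ?thesis using group.inv_equality[OF group_UT] dd_carrier[OF assms] dd_carrier[OF nz] dd_one
    by metis
qed

lemma D0_sub: "subgroup (D0 n \<rho>) (UT n \<rho> :: ('a::field mat \<times> 'a mat) monoid)"
proof (rule group.subgroupI[OF group_UT])
  show "D0 n \<rho> \<subseteq> carrier (UT n \<rho> :: ('a::field mat \<times> 'a mat) monoid)"
    unfolding D0_dd using dd_carrier by blast
  have "dd n \<rho> (\<lambda>i. 1 :: 'a) \<in> D0 n \<rho>" unfolding D0_dd by auto
  then show "D0 n \<rho> \<noteq> ({} :: ('a mat \<times> 'a mat) set)" by auto
next
  fix a :: "'a mat \<times> 'a mat" assume "a \<in> D0 n \<rho>"
  then obtain d where "a = dd n \<rho> d" "\<forall>i \<in> {1..n}. d i \<noteq> 0" unfolding D0_dd by auto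
  then show "inv\<^bsub>UT n \<rho>\<^esub> a \<in> D0 n \<rho>" using dd_inv unfolding D0_dd
    by (intro CollectI exI[of _ "\<lambda>i. inverse (d i)"]) auto
next
  fix a b :: "'a mat \<times> 'a mat" assume "a \<in> D0 n \<rho>" "b \<in> D0 n \<rho>"
  then obtain d e where "a = dd n \<rho> d" "\<forall>i \<in> {1..n}. d i \<noteq> 0"
    "b = dd n \<rho> e" "\<forall>i \<in> {1..n}. e i \<noteq> 0" unfolding D0_dd by auto
  then show "a \<otimes>\<^bsub>UT n \<rho>\<^esub> b \<in> D0 n \<rho>" using dd_mult unfolding D0_dd
    by (intro CollectI exI[of _ "\<lambda>i. d i * e i"]) auto
qed

lemma D0_normal: "D0 n \<rho> \<lhd> (UT n \<rho> :: ('a::field mat \<times> 'a mat) monoid)"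
proof -
  interpret G: group "UT n \<rho> :: ('a::field mat \<times> 'a mat) monoid" by (rule group_UT)
  show ?thesis unfolding G.normal_inv_iff
  proof (intro conjI ballI)
    show "subgroup (D0 n \<rho>) (UT n \<rho> :: ('a::field mat \<times> 'a mat) monoid)" by (rule D0_sub)
  next
    fix x h :: "'a mat \<times> 'a mat" assume x: "x \<in> carrier (UT n \<rho>)" and h: "h \<in> D0 n \<rho>"
    then obtain d where d: "h = dd n \<rho> d" "\<forall>i \<in> {1..n}. d i \<noteq> 0" unfolding D0_dd by auto
    have hc: "h \<in> carrier (UT n \<rho>)" using d dd_carrier by auto
    have "x \<otimes>\<^bsub>UT n \<rho>\<^esub> h \<otimes>\<^bsub>UT n \<rho>\<^esub> inv\<^bsub>UT n \<rho>\<^esub> x = h"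
      using dd_central[OF d(2) x] d(1) x hc by (metis G.inv_closed G.m_assoc G.r_inv G.r_one)
    then show "x \<otimes>\<^bsub>UT n \<rho>\<^esub> h \<otimes>\<^bsub>UT n \<rho>\<^esub> inv\<^bsub>UT n \<rho>\<^esub> x \<in> D0 n \<rho>" using h by simp
  qed
qed

lemma coset_dd: assumes "\<forall>i \<in> {1..n}. d i \<noteq> 0" "x \<in> carrier (UT n \<rho>)"
  shows "D0 n \<rho> #>\<^bsub>UT n \<rho>\<^esub> (dd n \<rho> d \<otimes>\<^bsub>UT n \<rho>\<^esub> x) = D0 n \<rho> #>\<^bsub>UT n \<rho>\<^esub> x"
proof -
  have "dd n \<rho> d \<otimes>\<^bsub>UT n \<rho>\<^esub> x \<in> D0 n \<rho> #>\<^bsub>UT n \<rho>\<^esub> x"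
    unfolding r_coset_def D0_dd using assms(1) by blast
  then show ?thesis using group.repr_independence[OF group_UT _ assms(2) D0_sub] by metis
qed

end

definition Eu :: "nat \<Rightarrow> nat \<Rightarrow> 'a::field mat" where
  "Eu i j = (\<lambda>a b. if a = i \<and> b = j then 1 else 0)"

context rs begin

lemma Eu_M: "(i,j) \<in> \<rho> \<Longrightarrow> Eu i j \<in> Mrho \<rho>"
  unfolding Eu_def Mrho_def by auto

lemma mult_Eu_r: "i \<in> {1..n} \<Longrightarrow> mmult n Z (Eu i j) a b = (if a \<in> {1..n} \<and> b \<in> {1..n} then (if b = j then Z a i else 0) else 0)"
  unfolding mmult_def Eu_def by (auto simp: if_distrib[of "\<lambda>x. _ * x"] cong: if_cong)

lemma mult_Eu_l: "j \<in> {1..n} \<Longrightarrow> mmult n (Eu i j) Z a b = (if a \<in> {1..n} \<and> b \<in> {1..n} then (if a = i then Z j b else 0) else 0)"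
  unfolding mmult_def Eu_def by (auto simp: if_distrib[of "\<lambda>x. x * _"] cong: if_cong)

lemma central_diag: assumes Z: "Z \<in> Mrho \<rho>" and c: "\<And>X. X \<in> Mrho \<rho> \<Longrightarrow> mmult n Z X = mmult n X Z"
  shows "Z = diagm n (\<lambda>i. Z i i)" "\<And>i j. (i,j) \<in> \<rho> \<Longrightarrow> Z i i = Z j j"
proof -
  have off: "Z a b = 0" if "a \<noteq> b" for a b
  proof (cases "a \<in> {1..n} \<and> b \<in> {1..n}")
    case True
    have "mmult n Z (Eu b b) a b = mmult n (Eu b b) Z a b" using c[OF Eu_M[OF rho_refl]] True by simp
    then show ?thesis using True that mult_Eu_r[of b Z b a b] mult_Eu_l[of b b Z a b] by simp
  next
    case False then show ?thesis using M_range[OF Z] by blast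
  qed
  show "Z = diagm n (\<lambda>i. Z i i)" unfolding diagm_def
    by (rule ext, rule ext) (use off M_range[OF Z] in auto)
  fix i j assume ij: "(i,j) \<in> \<rho>"
  note r = rho_sub[OF ij]
  have "mmult n Z (Eu i j) i j = mmult n (Eu i j) Z i j" using c[OF Eu_M[OF ij]] by simp
  then show "Z i i = Z j j" using r mult_Eu_r[of i Z j i j] mult_Eu_l[of j i Z i j] by simp
qed

lemma Cinn_eq_coset: assumes A: "A \<in> RUnits n \<rho>" and B: "B \<in> RUnits n \<rho>" and a: "a \<in> Tgrp \<rho>"
  and eq: "Cinn n \<rho> A = Cinn n \<rho> B"
  shows "D0 n \<rho> #>\<^bsub>UT n \<rho>\<^esub> (A, a) = D0 n \<rho> #>\<^bsub>UT n \<rho>\<^esub> (B, a)"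
proof -
  note uA = units_D[OF A] and uB = units_D[OF B]
  let ?Ai = "minv n \<rho> A" and ?Bi = "minv n \<rho> B"
  define Z where "Z = mmult n ?Bi A"
  have ZU: "Z \<in> RUnits n \<rho>" unfolding Z_def using mult_units minv_units A B by blast
  have ZM: "Z \<in> Mrho \<rho>" using units_D[OF ZU] by simp
  have comm: "mmult n Z X = mmult n X Z" if X: "X \<in> Mrho \<rho>" for X
  proof -
    have e: "mmult n (mmult n A X) ?Ai = mmult n (mmult n B X) ?Bi"
      using fun_cong[OF eq, of X] X unfolding Cinn_def by simp
    have AX: "mmult n A X \<in> Mrho \<rho>" "mmult n B X \<in> Mrho \<rho>" using mmult_M uA uB X by auto
    have "mmult n Z X = mmult n ?Bi (mmult n (mmult n (mmult n A X) ?Ai) A)"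
      unfolding Z_def by (simp add: mmult_assoc uA mone_right AX X flip: mmult_assoc[of n X])
    also have "\<dots> = mmult n ?Bi (mmult n (mmult n (mmult n B X) ?Bi) A)" by (simp only: e)
    also have "\<dots> = mmult n X Z"
      unfolding Z_def using mmult_M[OF X mmult_M[OF uB(2) uA(1)]]
      by (simp add: mmult_assoc X mone_left uB flip: mmult_assoc[of n ?Bi B])
    finally show ?thesis .
  qed
  define z where "z = (\<lambda>i. Z i i)"
  have Zd: "Z = diagm n z" and zc: "\<And>i j. (i,j) \<in> \<rho> \<Longrightarrow> z i = z j"
    using central_diag[OF ZM comm] unfolding z_def by auto
  have znz: "\<forall>i \<in> {1..n}. z i \<noteq> 0"
  proof
    fix i assume i: "i \<in> {1..n}"
    have "mmult n Z (minv n \<rho> Z) i i = mone n i i" using units_D[OF ZU] by simp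
    then show "z i \<noteq> 0" using i unfolding Zd mmult_diag_left mone_def by auto
  qed
  have AZ: "A = mmult n B Z" unfolding Z_def
    by (simp add: uB uA mone_left flip: mmult_assoc)
  have delta: "(\<lambda>i j. if (i, j) \<in> \<rho> then inverse (z i) * z j else 1) = (\<lambda>i j. 1)"
    using zc znz rho_sub by (auto intro!: ext)
  have "dd n \<rho> z \<otimes>\<^bsub>UT n \<rho>\<^esub> (B, a) = (B, a) \<otimes>\<^bsub>UT n \<rho>\<^esub> dd n \<rho> z"
    using dd_central[OF znz] B a by simp
  also have "\<dots> = (A, a)" unfolding dd_def using AZ Zd delta a by (simp add: act_diag fmul_one)
  finally show ?thesis using coset_dd[OF znz, of "(B, a)"] B a by simp
qed

end



lemma forest_potential:
  fixes w :: "nat \<Rightarrow> nat \<Rightarrow> 'a::field"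
  assumes "finite F" "sym F" "\<forall>(i,j)\<in>F. (i,j) \<notin> (F - {(i,j),(j,i)})\<^sup>*"
    "\<forall>(i,j)\<in>F. w i j \<noteq> 0 \<and> w j i = inverse (w i j)"
  shows "\<exists>d. (\<forall>i. d i \<noteq> 0) \<and> (\<forall>(i,j)\<in>F. d j = d i * w i j)"
  using assms
proof (induct "card F" arbitrary: F rule: less_induct)
  case (less F)
  show ?case
  proof (cases "F = {}")
    case True then show ?thesis by (intro exI[of _ "\<lambda>_. 1"]) auto
  next
    case False
    then obtain i j where ij: "(i,j) \<in> F" by auto
    define F' where "F' = F - {(i,j),(j,i)}"
    have ji: "(j,i) \<in> F" using ij less.prems(2) unfolding sym_def by blast
    have card: "card F' < card F" unfolding F'_def using ij less.prems(1)
      by (intro psubset_card_mono) auto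
    have symF': "sym F'" using less.prems(2) unfolding F'_def sym_def by blast
    have sub: "\<And>u v. F' - {(u,v),(v,u)} \<subseteq> F - {(u,v),(v,u)}" unfolding F'_def by blast
    have brF': "\<forall>(u,v)\<in>F'. (u,v) \<notin> (F' - {(u,v),(v,u)})\<^sup>*"
    proof (clarify)
      fix u v assume "(u,v) \<in> F'" "(u,v) \<in> (F' - {(u,v),(v,u)})\<^sup>*"
      then show False using less.prems(3) rtrancl_mono[OF sub[of u v]] unfolding F'_def by blast
    qed
    have wF': "\<forall>(u,v)\<in>F'. w u v \<noteq> 0 \<and> w v u = inverse (w u v)" using less.prems(4) unfolding F'_def by blast
    obtain d' where d': "\<forall>i. d' i \<noteq> 0" "\<forall>(u,v)\<in>F'. d' v = d' u * w u v"
      using less.hyps[OF card _ symF' brF' wF'] less.prems(1) unfolding F'_def by auto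
    define R where "R = {v. (j,v) \<in> F'\<^sup>*}"
    have jR: "j \<in> R" unfolding R_def by simp
    have iR: "i \<notin> R"
    proof
      assume "i \<in> R"
      then have "(j,i) \<in> F'\<^sup>*" unfolding R_def by simp
      then have "(i,j) \<in> F'\<^sup>*" using sym_rtrancl[OF symF'] unfolding sym_def by blast
      then show False using less.prems(3) ij unfolding F'_def by blast
    qed
    have closed: "u \<in> R \<longleftrightarrow> v \<in> R" if "(u,v) \<in> F'" for u v
    proof
      assume "u \<in> R" then show "v \<in> R" using that unfolding R_def by (simp add: rtrancl_into_rtrancl)
    next
      have "(v,u) \<in> F'" using that symF' unfolding sym_def by blast
      moreover assume "v \<in> R" ultimately show "u \<in> R" unfolding R_def by (simp add: rtrancl_into_rtrancl)
    qed
    have wij: "w i j \<noteq> 0" "w j i = inverse (w i j)" using less.prems(4) ij by auto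
    define c where "c = d' i * w i j * inverse (d' j)"
    have c0: "c \<noteq> 0" unfolding c_def using d'(1) wij by simp
    define d where "d = (\<lambda>v. if v \<in> R then c * d' v else d' v)"
    have "\<forall>(u,v)\<in>F. d v = d u * w u v"
    proof (clarify)
      fix u v assume uv: "(u,v) \<in> F"
      consider "(u,v) \<in> F'" | "(u,v) = (i,j)" | "(u,v) = (j,i)" using uv unfolding F'_def by blast
      then show "d v = d u * w u v"
      proof cases
        case 1 then show ?thesis using closed[OF 1] d'(2) unfolding d_def by auto
      next
        case 2 then show ?thesis using jR iR d'(1) unfolding d_def c_def by (auto simp: field_simps)
      next
        case 3 then show ?thesis using jR iR d'(1) wij unfolding d_def c_def by (auto simp: field_simps)
      qed
    qed
    moreover have "\<forall>i. d i \<noteq> 0" unfolding d_def using c0 d'(1) by auto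
    ultimately show ?thesis by blast
  qed
qed




context rs begin

lemma equiv_trans: "equivr \<rho> i j \<Longrightarrow> equivr \<rho> j k \<Longrightarrow> equivr \<rho> i k"
  unfolding equivr_def using rho_trans by blast

lemma iso_equiv: assumes "isolated n \<rho> i" "equivr \<rho> i j" shows "isolated n \<rho> j"
  unfolding isolated_def
proof (intro ballI impI)
  fix k assume k: "k \<in> {1..n}" "(j, k) \<in> \<rho> \<or> (k, j) \<in> \<rho>"
  then have "(i, k) \<in> \<rho> \<or> (k, i) \<in> \<rho>" using assms(2) rho_trans unfolding equivr_def by blast
  then have "equivr \<rho> i k" using assms(1) k(1) unfolding isolated_def by blast
  then show "equivr \<rho> j k" using assms(2) equiv_trans unfolding equivr_def by blast
qed

lemma const_on_rho:
  fixes d :: "nat \<Rightarrow> 'b"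
  assumes SF: "spanning_forest n \<rho> F"
    and H1: "\<And>i j. (i,j) \<in> \<rho> \<Longrightarrow> (i,j) \<in> F \<Longrightarrow> d i = d j"
    and H2: "\<And>i j. (i,j) \<in> \<rho> \<Longrightarrow> isolated n \<rho> i \<Longrightarrow> equivr \<rho> i j \<Longrightarrow> d i = d j"
    and ij: "(i,j) \<in> \<rho>"
  shows "d i = d j"
proof -
  have FE: "F \<subseteq> DeltaE n \<rho>" "sym F"
    and conn: "\<And>u v. u \<in> DeltaV n \<rho> \<Longrightarrow> v \<in> DeltaV n \<rho> \<Longrightarrow> (u,v) \<in> (DeltaE n \<rho>)\<^sup>* \<Longrightarrow> (u,v) \<in> F\<^sup>*"
    using SF unfolding spanning_forest_def by auto
  have Fedge: "d u = d v" if "(u,v) \<in> F" for u v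
  proof -
    have "(u,v) \<in> \<rho> \<or> (v,u) \<in> \<rho>" using that FE(1) unfolding DeltaE_def by auto
    moreover have "(v,u) \<in> F" using that FE(2) unfolding sym_def by blast
    ultimately show ?thesis using H1 that by metis
  qed
  have Fpath: "d u = d v" if "(u,v) \<in> F\<^sup>*" for u v
    using that by (induct rule: rtrancl_induct) (auto dest: Fedge)
  have Epath: "d u = d v" if "u \<in> DeltaV n \<rho>" "v \<in> DeltaV n \<rho>" "(u,v) \<in> (DeltaE n \<rho>)\<^sup>*" for u v
    using Fpath conn that by blast
  have r: "i \<in> {1..n}" "j \<in> {1..n}" using rho_sub[OF ij] by auto
  show ?thesis
  proof (cases "isolated n \<rho> i")
    case True
    then have "equivr \<rho> i j" using r ij unfolding isolated_def by blast
    then show ?thesis using H2 ij True by blast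
  next
    case False
    then obtain k where k: "k \<in> {1..n}" "(i,k) \<in> \<rho> \<or> (k,i) \<in> \<rho>" "\<not> equivr \<rho> i k"
      unfolding isolated_def by blast
    have iV: "i \<in> DeltaV n \<rho>" using False r unfolding DeltaV_def by auto
    show ?thesis
    proof (cases "equivr \<rho> i j")
      case False
      have "\<not> isolated n \<rho> j" using False ij r unfolding isolated_def equivr_def by blast
      then have jV: "j \<in> DeltaV n \<rho>" using r unfolding DeltaV_def by auto
      have "(i,j) \<in> DeltaE n \<rho>" using iV jV False ij unfolding DeltaE_def by auto
      then show ?thesis using Epath[OF iV jV] by blast
    next
      case True
      have kV: "k \<in> DeltaV n \<rho>" using k r unfolding DeltaV_def isolated_def equivr_def by blast
      have jk: "(j,k) \<in> \<rho> \<or> (k,j) \<in> \<rho>" using k(2) True rho_trans unfolding equivr_def by blast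
      have njk: "\<not> equivr \<rho> j k" using True k(3) equiv_trans by blast
      have jV: "j \<in> DeltaV n \<rho>" using r jk njk k(1) unfolding DeltaV_def isolated_def by blast
      have "(i,k) \<in> DeltaE n \<rho>" "(k,j) \<in> DeltaE n \<rho>"
        using iV kV jV k jk njk unfolding DeltaE_def equivr_def by auto
      then have "(i,j) \<in> (DeltaE n \<rho>)\<^sup>*" by (meson converse_rtrancl_into_rtrancl r_into_rtrancl)
      then show ?thesis using Epath[OF iV jV] by blast
    qed
  qed
qed

lemma potential_exists:
  fixes a :: "'a::field mat"
  assumes SF: "spanning_forest n \<rho> F" and a: "a \<in> Tgrp \<rho>"
  shows "\<exists>d. (\<forall>i. d i \<noteq> 0) \<and> (\<forall>i j. (i,j) \<in> \<rho> \<longrightarrow> ((i,j) \<in> F \<or> (isolated n \<rho> i \<and> equivr \<rho> i j))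
           \<longrightarrow> d j = d i * a i j)"
proof -
  have FE: "F \<subseteq> DeltaE n \<rho>" "sym F" "\<forall>(i, j) \<in> F. (i, j) \<notin> (F - {(i, j), (j, i)})\<^sup>*"
    using SF unfolding spanning_forest_def by auto
  have fin: "finite F" using FE(1) unfolding DeltaE_def DeltaV_def
    by (rule finite_subset) (rule finite_subset[of _ "{1..n} \<times> {1..n}"], auto)
  define w where "w = (\<lambda>i j. if (i,j) \<in> \<rho> then a i j else inverse (a j i))"
  have wF: "\<forall>(i,j)\<in>F. w i j \<noteq> 0 \<and> w j i = inverse (w i j)"
  proof (clarify)
    fix i j assume "(i,j) \<in> F"
    then have "(i,j) \<in> DeltaE n \<rho>" using FE by auto
    then have "((i,j) \<in> \<rho> \<and> (j,i) \<notin> \<rho>) \<or> ((j,i) \<in> \<rho> \<and> (i,j) \<notin> \<rho>)"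
      unfolding DeltaE_def equivr_def by auto
    then show "w i j \<noteq> 0 \<and> w j i = inverse (w i j)" unfolding w_def using T_nz[OF a] by auto
  qed
  obtain d' :: "nat \<Rightarrow> 'a" where d': "\<forall>i. d' i \<noteq> 0" "\<forall>(i,j)\<in>F. d' j = d' i * w i j"
    using forest_potential[OF fin FE(2) FE(3) wF] by blast
  define r where "r = (\<lambda>j. LEAST k. equivr \<rho> k j)"
  define d where "d = (\<lambda>j. if j \<in> DeltaV n \<rho> then d' j else a (r j) j)"
  have rj: "equivr \<rho> (r j) j" if "j \<in> {1..n}" for j
    unfolding r_def by (rule LeastI[of _ j]) (use that rho_refl in \<open>auto simp: equivr_def\<close>)
  have "d i \<noteq> 0" for i
  proof (cases "(r i, i) \<in> \<rho>")
    case True then show ?thesis unfolding d_def using d'(1) T_nz[OF a] by auto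
  next
    case False then show ?thesis unfolding d_def using d'(1) T_out[OF a] by auto
  qed
  moreover have "d j = d i * a i j" if ij: "(i,j) \<in> \<rho>" and c: "(i,j) \<in> F \<or> (isolated n \<rho> i \<and> equivr \<rho> i j)" for i j
    using c
  proof
    assume F: "(i,j) \<in> F"
    then have "i \<in> DeltaV n \<rho>" "j \<in> DeltaV n \<rho>" using FE(1) unfolding DeltaE_def by auto
    then show ?thesis using d'(2) F ij unfolding d_def w_def by auto
  next
    assume iso: "isolated n \<rho> i \<and> equivr \<rho> i j"
    have r: "i \<in> {1..n}" "j \<in> {1..n}" using rho_sub[OF ij] by auto
    have "isolated n \<rho> j" using iso iso_equiv by blast
    then have nV: "i \<notin> DeltaV n \<rho>" "j \<notin> DeltaV n \<rho>" using iso unfolding DeltaV_def by auto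
    have "\<And>k. equivr \<rho> k i \<longleftrightarrow> equivr \<rho> k j" using iso equiv_trans equivr_def by metis
    then have rr: "r i = r j" unfolding r_def by simp
    have "(r i, i) \<in> \<rho>" using rj[OF r(1)] unfolding equivr_def by auto
    then show ?thesis using nV rr T_mult[OF a _ ij] unfolding d_def by auto
  qed
  ultimately show ?thesis by blast
qed

end



definition sel :: "nat \<Rightarrow> (nat \<times> nat) set \<Rightarrow> ('a::field mat \<Rightarrow> 'a mat) \<Rightarrow> 'a mat" where
  "sel n \<rho> f = (SOME A. A \<in> RUnits n \<rho> \<and> f = Cinn n \<rho> A)"

lemma sel: "f \<in> Inn n \<rho> \<Longrightarrow> sel n \<rho> f \<in> RUnits n \<rho> \<and> f = Cinn n \<rho> (sel n \<rho> f)"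
  unfolding sel_def Inn_def using someI_ex[of "\<lambda>A. A \<in> RUnits n \<rho> \<and> f = Cinn n \<rho> A"] by blast

lemma Psi_eq: "Psi n \<rho> (f, a) = D0 n \<rho> #>\<^bsub>UT n \<rho>\<^esub> (sel n \<rho> f, a)"
  unfolding Psi_def sel_def by simp

lemma IG_simps [simp]: "carrier (IG n \<rho> F) = Inn n \<rho> \<times> Ggrp n \<rho> F"
  "(f, a) \<otimes>\<^bsub>IG n \<rho> F\<^esub> (g, b) = (compose (Mrho \<rho>) f (Cinn n \<rho> (act \<rho> a (sel n \<rho> g))), fmul a b)"
  unfolding IG_def actI_def sel_def by auto

lemma G_T: "Ggrp n \<rho> F \<subseteq> Tgrp \<rho>" unfolding Ggrp_def by auto

context rs begin

lemma Psi_sel: assumes "C \<in> RUnits n \<rho>" "a \<in> Tgrp \<rho>"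
  shows "Psi n \<rho> (Cinn n \<rho> C, a) = D0 n \<rho> #>\<^bsub>UT n \<rho>\<^esub> (C, a)"
proof -
  have "Cinn n \<rho> C \<in> Inn n \<rho>" using assms unfolding Inn_def by auto
  note s = sel[OF this]
  show ?thesis unfolding Psi_eq using Cinn_eq_coset[OF conjunct1[OF s] assms(1) assms(2)] s by simp
qed

lemma Cinn_central: assumes B: "B \<in> RUnits n \<rho>" and d: "\<forall>i \<in> {1..n}. d i \<noteq> 0"
  and c: "\<And>i j. (i,j) \<in> \<rho> \<Longrightarrow> d i = d j"
  shows "Cinn n \<rho> (mmult n B (diagm n d)) = Cinn n \<rho> B"
proof (rule ext)
  fix X :: "'a mat"
  note du = diag_units[OF d]
  show "Cinn n \<rho> (mmult n B (diagm n d)) X = Cinn n \<rho> B X"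
  proof (cases "X \<in> Mrho \<rho>")
    case True
    have comm: "mmult n (diagm n d) X = mmult n X (diagm n d)"
      unfolding mmult_diag_left mmult_diag_right
      by (rule ext, rule ext) (use c M_out[OF True] in \<open>auto simp: mult.commute\<close>)
    have one: "diagm n (\<lambda>i. d i * inverse (d i)) = mone n"
      unfolding mone_def diagm_def using d by (auto intro!: ext)
    have "Cinn n \<rho> (diagm n d) X = mmult n (mmult n X (diagm n d)) (diagm n (\<lambda>i. inverse (d i)))"
      unfolding Cinn_def using True du by (simp add: comm)
    also have "\<dots> = X" by (simp add: mmult_assoc diag_mult one mone_right True)
    finally have "Cinn n \<rho> (diagm n d) X = X" .
    then show ?thesis using fun_cong[OF Cinn_mult[OF B du(1)], of X] True unfolding compose_def by simp
  next
    case False then show ?thesis unfolding Cinn_def by simp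
  qed
qed

end



context rs begin

lemma Psi_hom: "Psi n \<rho> \<in> hom (IG n \<rho> F) (UT n \<rho> Mod D0 n \<rho> :: ('a::field mat \<times> 'a mat) set monoid)"
proof -
  interpret N: normal "D0 n \<rho>" "UT n \<rho> :: ('a::field mat \<times> 'a mat) monoid" by (rule D0_normal)
  show ?thesis unfolding hom_def
  proof (intro CollectI conjI ballI)
    show "Psi n \<rho> \<in> carrier (IG n \<rho> F) \<rightarrow> carrier (UT n \<rho> Mod D0 n \<rho> :: ('a::field mat \<times> 'a mat) set monoid)"
    proof
      fix x :: "('a mat \<Rightarrow> 'a mat) \<times> 'a mat" assume "x \<in> carrier (IG n \<rho> F)"
      then obtain f a where x: "x = (f, a)" "f \<in> Inn n \<rho>" "a \<in> Ggrp n \<rho> F" by auto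
      have "a \<in> Tgrp \<rho>" using G_T x(3) by auto
      then show "Psi n \<rho> x \<in> carrier (UT n \<rho> Mod D0 n \<rho>)"
        unfolding carrier_FactGroup using sel[OF x(2)] x(1) by (auto simp: Psi_eq)
    qed
  next
    fix x y :: "('a mat \<Rightarrow> 'a mat) \<times> 'a mat"
    assume "x \<in> carrier (IG n \<rho> F)" "y \<in> carrier (IG n \<rho> F)"
    then obtain f a g b where x: "x = (f, a)" "f \<in> Inn n \<rho>" "a \<in> Ggrp n \<rho> F"
      and y: "y = (g, b)" "g \<in> Inn n \<rho>" "b \<in> Ggrp n \<rho> F" by auto
    define A where "A = sel n \<rho> f"
    define B where "B = sel n \<rho> g"
    have A: "A \<in> RUnits n \<rho>" "f = Cinn n \<rho> A" using sel[OF x(2)] unfolding A_def by auto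
    have B: "B \<in> RUnits n \<rho>" using sel[OF y(2)] unfolding B_def by auto
    have a: "a \<in> Tgrp \<rho>" and b: "b \<in> Tgrp \<rho>" using x y G_T by auto
    have aB: "act \<rho> a B \<in> RUnits n \<rho>" using act_units[OF a B] by simp
    have "x \<otimes>\<^bsub>IG n \<rho> F\<^esub> y = (Cinn n \<rho> (mmult n A (act \<rho> a B)), fmul a b)"
      using x y Cinn_mult[OF A(1) aB] A(2) unfolding B_def by simp
    then have "Psi n \<rho> (x \<otimes>\<^bsub>IG n \<rho> F\<^esub> y) = D0 n \<rho> #>\<^bsub>UT n \<rho>\<^esub> ((A, a) \<otimes>\<^bsub>UT n \<rho>\<^esub> (B, b))"
      using Psi_sel[OF mult_units(1)[OF A(1) aB] T_fmul[OF a b]] by simp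
    also have "\<dots> = (D0 n \<rho> #>\<^bsub>UT n \<rho>\<^esub> (A, a)) <#>\<^bsub>UT n \<rho>\<^esub> (D0 n \<rho> #>\<^bsub>UT n \<rho>\<^esub> (B, b))"
      using N.rcos_sum A B a b by simp
    finally show "Psi n \<rho> (x \<otimes>\<^bsub>IG n \<rho> F\<^esub> y) = Psi n \<rho> x \<otimes>\<^bsub>UT n \<rho> Mod D0 n \<rho>\<^esub> Psi n \<rho> y"
      using x y unfolding A_def B_def by (simp add: Psi_eq)
  qed
qed

lemma Psi_inj: assumes SF: "spanning_forest n \<rho> F"
  shows "inj_on (Psi n \<rho> :: _ \<Rightarrow> ('a::field mat \<times> 'a mat) set) (carrier (IG n \<rho> F))"
proof
  interpret G: group "UT n \<rho> :: ('a::field mat \<times> 'a mat) monoid" by (rule group_UT)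
  fix x y :: "('a mat \<Rightarrow> 'a mat) \<times> 'a mat"
  assume "x \<in> carrier (IG n \<rho> F)" "y \<in> carrier (IG n \<rho> F)" and eq: "Psi n \<rho> x = Psi n \<rho> y"
  then obtain f a g b where x: "x = (f, a)" "f \<in> Inn n \<rho>" "a \<in> Ggrp n \<rho> F"
    and y: "y = (g, b)" "g \<in> Inn n \<rho>" "b \<in> Ggrp n \<rho> F" by auto
  define A where "A = sel n \<rho> f"
  define B where "B = sel n \<rho> g"
  have A: "A \<in> RUnits n \<rho>" "f = Cinn n \<rho> A" using sel[OF x(2)] unfolding A_def by auto
  have B: "B \<in> RUnits n \<rho>" "g = Cinn n \<rho> B" using sel[OF y(2)] unfolding B_def by auto
  have a: "a \<in> Tgrp \<rho>" and b: "b \<in> Tgrp \<rho>" using x y G_T by auto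
  have "(A, a) \<in> D0 n \<rho> #>\<^bsub>UT n \<rho>\<^esub> (B, b)"
    using eq x y G.rcos_self[OF _ D0_sub, of "(A, a)"] A a unfolding A_def B_def by (simp add: Psi_eq)
  then obtain h where h: "h \<in> D0 n \<rho>" "(A, a) = h \<otimes>\<^bsub>UT n \<rho>\<^esub> (B, b)" unfolding r_coset_def by auto
  then obtain d where d: "h = dd n \<rho> d" "\<forall>i \<in> {1..n}. d i \<noteq> 0" unfolding D0_dd by auto
  have "(A, a) = (B, b) \<otimes>\<^bsub>UT n \<rho>\<^esub> dd n \<rho> d" using h d dd_central[OF d(2), of "(B, b)"] B b by simp
  then have AB: "A = mmult n B (diagm n d)"
    and ab: "a = fmul b (\<lambda>i j. if (i, j) \<in> \<rho> then inverse (d i) * d j else 1)"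
    unfolding dd_def using b by (auto simp: act_diag)
  have key: "d i = d j" if ij: "(i,j) \<in> \<rho>" and c: "(i,j) \<in> F \<or> (isolated n \<rho> i \<and> equivr \<rho> i j)" for i j
  proof -
    have "a i j = 1" "b i j = 1" using x(3) y(3) ij c unfolding Ggrp_def by auto
    then have "inverse (d i) * d j = 1" using fun_cong[OF fun_cong[OF ab, of i], of j] ij unfolding fmul_def by simp
    then show ?thesis using d(2) rho_sub[OF ij] by (simp add: field_simps)
  qed
  have const: "\<And>i j. (i,j) \<in> \<rho> \<Longrightarrow> d i = d j"
    using const_on_rho[OF SF, of d] key by blast
  have "a = b" unfolding ab fmul_def using const d(2) rho_sub by (auto intro!: ext)
  moreover have "f = g" using A(2) B(2) AB Cinn_central[OF B(1) d(2) const] by simp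
  ultimately show "x = y" using x y by simp
qed

lemma Psi_surj: assumes SF: "spanning_forest n \<rho> F"
  shows "carrier (UT n \<rho> Mod D0 n \<rho> :: ('a::field mat \<times> 'a mat) set monoid) \<subseteq> Psi n \<rho> ` carrier (IG n \<rho> F)"
proof
  fix C :: "('a mat \<times> 'a mat) set" assume "C \<in> carrier (UT n \<rho> Mod D0 n \<rho>)"
  then obtain A a where C: "C = D0 n \<rho> #>\<^bsub>UT n \<rho>\<^esub> (A, a)" and A: "A \<in> RUnits n \<rho>" and a: "a \<in> Tgrp \<rho>"
    unfolding carrier_FactGroup by auto
  obtain d :: "nat \<Rightarrow> 'a" where d: "\<forall>i. d i \<noteq> 0"
    "\<forall>i j. (i,j) \<in> \<rho> \<longrightarrow> ((i,j) \<in> F \<or> (isolated n \<rho> i \<and> equivr \<rho> i j)) \<longrightarrow> d j = d i * a i j"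
    using potential_exists[OF SF a] by blast
  have dn: "\<forall>i \<in> {1..n}. d i \<noteq> 0" using d by auto
  define g where "g = (\<lambda>i j. if (i,j) \<in> \<rho> then a i j * d i * inverse (d j) else 1)"
  have gT: "g \<in> Tgrp \<rho>" unfolding Tgrp_def g_def
    using d(1) T_nz[OF a] T_mult[OF a] rho_trans
    by (auto simp: field_simps)
  have gG: "g \<in> Ggrp n \<rho> F" unfolding Ggrp_def using gT d(1) d(2) T_nz[OF a]
    by (auto simp: g_def field_simps)
  define B where "B = mmult n A (diagm n (\<lambda>i. inverse (d i)))"
  have dinv: "\<forall>i \<in> {1..n}. inverse (d i) \<noteq> 0" using d by auto
  have BU: "B \<in> RUnits n \<rho>" unfolding B_def using mult_units(1)[OF A diag_units(1)[OF dinv]] .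
  have one: "diagm n (\<lambda>i. inverse (d i) * d i) = mone n"
    unfolding mone_def diagm_def using d by (auto intro!: ext)
  have "dd n \<rho> d \<otimes>\<^bsub>UT n \<rho>\<^esub> (B, g) = (B, g) \<otimes>\<^bsub>UT n \<rho>\<^esub> dd n \<rho> d"
    using dd_central[OF dn, of "(B, g)"] BU gT by simp
  also have "\<dots> = (A, a)"
  proof -
    have "mmult n B (diagm n d) = A" unfolding B_def
      by (simp add: mmult_assoc diag_mult one mone_right units_D(1)[OF A])
    moreover have "fmul g (\<lambda>i j. if (i, j) \<in> \<rho> then inverse (d i) * d j else 1) = a"
      unfolding fmul_def g_def using d(1) T_out[OF a] by (auto intro!: ext simp: field_simps)
    ultimately show ?thesis unfolding dd_def using gT by (simp add: act_diag)
  qed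
  finally have "D0 n \<rho> #>\<^bsub>UT n \<rho>\<^esub> (B, g) = C" using coset_dd[OF dn, of "(B, g)"] BU gT C by simp
  then have "Psi n \<rho> (Cinn n \<rho> B, g) = C" using Psi_sel[OF BU gT] by simp
  moreover have "(Cinn n \<rho> B, g) \<in> carrier (IG n \<rho> F)" using BU gG by (auto simp: Inn_def)
  ultimately show "C \<in> Psi n \<rho> ` carrier (IG n \<rho> F)" by blast
qed

end

lemma main_c2: assumes "rho_preorder n \<rho>"
  shows "\<forall>A \<in> RUnits n \<rho>. \<forall>B \<in> RUnits n \<rho>. \<forall>a \<in> Ggrp n \<rho> F.
          Cinn n \<rho> A = Cinn n \<rho> B \<longrightarrow>
          D0 n \<rho> #>\<^bsub>UT n \<rho>\<^esub> (A, a) = D0 n \<rho> #>\<^bsub>UT n \<rho>\<^esub> (B, a)"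
proof -
  interpret rs n \<rho> by unfold_locales (rule assms)
  show ?thesis using Cinn_eq_coset G_T by blast
qed

lemma main_c3: assumes "rho_preorder n \<rho>" "spanning_forest n \<rho> F"
  shows "Psi n \<rho> \<in> iso (IG n \<rho> F) (UT n \<rho> Mod D0 n \<rho>)"
proof -
  interpret rs n \<rho> by unfold_locales (rule assms(1))
  have hom: "Psi n \<rho> \<in> hom (IG n \<rho> F) (UT n \<rho> Mod D0 n \<rho>)"
    by (rule Psi_hom)
  have img: "Psi n \<rho> ` carrier (IG n \<rho> F) = carrier (UT n \<rho> Mod D0 n \<rho>)"
    using Psi_surj[OF assms(2)] hom unfolding hom_def by auto
  show ?thesis unfolding iso_def bij_betw_def using hom img Psi_inj[OF assms(2)] by blast
qed

lemma main_c1: assumes "rho_preorder n \<rho>" shows "D0 n \<rho> \<lhd> UT n \<rho>"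
proof -
  interpret rs n \<rho> by unfold_locales (rule assms(1))
  show ?thesis by (rule D0_normal)
qed

theorem mainTheorem8:
  fixes n :: nat and \<rho> :: "(nat \<times> nat) set" and F :: "(nat \<times> nat) set"
  assumes "n \<ge> 1"
    and "rho_preorder n \<rho>"
    and "spanning_forest n \<rho> F"
  shows "D0 n \<rho> \<lhd> (UT n \<rho> :: ('a::field mat \<times> 'a mat) monoid)
    \<and> (\<forall>A \<in> RUnits n \<rho>. \<forall>B \<in> RUnits n \<rho>. \<forall>a \<in> Ggrp n \<rho> F.
          Cinn n \<rho> A = Cinn n \<rho> B \<longrightarrow>
          D0 n \<rho> #>\<^bsub>UT n \<rho>\<^esub> (A, a) = D0 n \<rho> #>\<^bsub>UT n \<rho>\<^esub> (B, a))
    \<and> Psi n \<rho> \<in> iso (IG n \<rho> F) (UT n \<rho> Mod D0 n \<rho>)"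
  by (intro conjI main_c1 main_c2 main_c3 assms(2) assms(3))


end
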